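(* Let $M$ and $N$ be matroids and let $P$ be a tensor product of $M$ and $N$. Let $S,T$ be disjoint subsets of $E(M)$ and $M'=M\setminus S/T$. Then $P'=P\setminus(S\times E(N))/(T\times E(N))$ is a tensor product of $M'$ and $N$.
   Context: Let $M,N$ be matroids on $E(M),E(N)$. A quasi product of $M$ and $N$ is a matroid $P$ on $E(M)\times E(N)$ such that: for every non-loop $e\in E(M)$ the map $x\mapsto(e,x)$ is an isomorphism from $N$ onto $P|_{\{e\}\times E(N)}$; for every non-loop $f\in E(N)$ the map $x\mapsto(x,f)$ is an isomorphism from $M$ onto $P|_{E(M)\times\{f\}}$; for a loop $e$ of $M$, $P|_{\{e\}\times E(N)}$ has rank $0$; for a loop $f$ of $N$, $P|_{E(M)\times\{f\}}$ has rank $0$. A tensor product of $M$ and $N$ is a quasi product of rank $\mathrm{rk}(M)\mathrm{rk}(N)$. *)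

theory Defs
  imports Main
begin

type_synonym 'a matroid = "'a set \<times> ('a set \<Rightarrow> bool)"

definition ground :: "'a matroid \<Rightarrow> 'a set" where
  "ground M = fst M"

definition indep :: "'a matroid \<Rightarrow> 'a set \<Rightarrow> bool" where
  "indep M = snd M"

definition is_matroid :: "'a matroid \<Rightarrow> bool" where
  "is_matroid M \<longleftrightarrow>
     finite (ground M) \<and>
     (\<forall>I. indep M I \<longrightarrow> I \<subseteq> ground M) \<and>
     indep M {} \<and>
     (\<forall>I J. indep M J \<and> I \<subseteq> J \<longrightarrow> indep M I) \<and>
     (\<forall>I J. indep M I \<and> indep M J \<and> card I < card J \<longrightarrow>
        (\<exists>x \<in> J - I. indep M (insert x I)))"

definition rk :: "'a matroid \<Rightarrow> 'a set \<Rightarrow> nat" where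
  "rk M A = Max {card I | I. I \<subseteq> A \<and> indep M I}"

definition is_loop :: "'a matroid \<Rightarrow> 'a \<Rightarrow> bool" where
  "is_loop M e \<longleftrightarrow> e \<in> ground M \<and> \<not> indep M {e}"

definition restrict :: "'a matroid \<Rightarrow> 'a set \<Rightarrow> 'a matroid" where
  "restrict M X = (ground M \<inter> X, \<lambda>I. indep M I \<and> I \<subseteq> X)"

definition delete :: "'a matroid \<Rightarrow> 'a set \<Rightarrow> 'a matroid" where
  "delete M S = restrict M (ground M - S)"

definition contract :: "'a matroid \<Rightarrow> 'a set \<Rightarrow> 'a matroid" where
  "contract M T = (ground M - T,
     \<lambda>I. I \<subseteq> ground M - T \<and> rk M (I \<union> (T \<inter> ground M)) = card I + rk M (T \<inter> ground M))"

definition matroid_iso :: "('a \<Rightarrow> 'b) \<Rightarrow> 'a matroid \<Rightarrow> 'b matroid \<Rightarrow> bool" where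
  "matroid_iso f M N \<longleftrightarrow> bij_betw f (ground M) (ground N) \<and>
     (\<forall>I \<subseteq> ground M. indep M I \<longleftrightarrow> indep N (f ` I))"

definition quasi_product :: "'a matroid \<Rightarrow> 'b matroid \<Rightarrow> ('a \<times> 'b) matroid \<Rightarrow> bool" where
  "quasi_product M N P \<longleftrightarrow>
     is_matroid P \<and> ground P = ground M \<times> ground N \<and>
     (\<forall>e \<in> ground M. \<not> is_loop M e \<longrightarrow>
        matroid_iso (\<lambda>x. (e, x)) N (restrict P ({e} \<times> ground N))) \<and>
     (\<forall>f \<in> ground N. \<not> is_loop N f \<longrightarrow>
        matroid_iso (\<lambda>x. (x, f)) M (restrict P (ground M \<times> {f}))) \<and>
     (\<forall>e \<in> ground M. is_loop M e \<longrightarrow> rk P ({e} \<times> ground N) = 0) \<and>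
     (\<forall>f \<in> ground N. is_loop N f \<longrightarrow> rk P (ground M \<times> {f}) = 0)"

definition tensor_product :: "'a matroid \<Rightarrow> 'b matroid \<Rightarrow> ('a \<times> 'b) matroid \<Rightarrow> bool" where
  "tensor_product M N P \<longleftrightarrow> quasi_product M N P \<and>
     rk P (ground P) = rk M (ground M) * rk N (ground N)"

end

theory Submission
  imports Defs
begin

lemma m_finite: "is_matroid Q \<Longrightarrow> finite (ground Q)"
  by (simp add: is_matroid_def)
lemma m_sub: "is_matroid Q \<Longrightarrow> indep Q I \<Longrightarrow> I \<subseteq> ground Q"
  by (simp add: is_matroid_def)
lemma m_empty: "is_matroid Q \<Longrightarrow> indep Q {}"
  by (simp add: is_matroid_def)
lemma m_subset: "is_matroid Q \<Longrightarrow> indep Q J \<Longrightarrow> I \<subseteq> J \<Longrightarrow> indep Q I"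
  unfolding is_matroid_def by blast
lemma m_aug: "is_matroid Q \<Longrightarrow> indep Q I \<Longrightarrow> indep Q J \<Longrightarrow> card I < card J \<Longrightarrow>
   \<exists>x \<in> J - I. indep Q (insert x I)"
  unfolding is_matroid_def by blast
lemma m_fin: assumes "is_matroid Q" "indep Q I" shows "finite I"
  using finite_subset[OF m_sub[OF assms] m_finite[OF assms(1)]] .

lemma rk_set_finite: assumes "is_matroid Q" shows "finite {card I | I. I \<subseteq> A \<and> indep Q I}"
proof -
  have "{card I | I. I \<subseteq> A \<and> indep Q I} \<subseteq> {..card (ground Q)}"
    using assms m_sub[OF assms] by (auto intro!: card_mono simp: m_finite)
  thus ?thesis using finite_subset by blast
qed

lemma rk_ge: "is_matroid Q \<Longrightarrow> I \<subseteq> A \<Longrightarrow> indep Q I \<Longrightarrow> card I \<le> rk Q A"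
  unfolding rk_def by (rule Max_ge) (auto simp: rk_set_finite)

lemma rk_basis: assumes "is_matroid Q" shows "\<exists>I. I \<subseteq> A \<and> indep Q I \<and> card I = rk Q A"
proof -
  have "rk Q A \<in> {card I | I. I \<subseteq> A \<and> indep Q I}"
    unfolding rk_def using assms m_empty[OF assms] by (intro Max_in rk_set_finite) auto
  thus ?thesis by auto
qed

lemma rk_mono: assumes "is_matroid Q" "A \<subseteq> B" shows "rk Q A \<le> rk Q B"
proof -
  obtain I where I: "I \<subseteq> A" "indep Q I" "card I = rk Q A" using rk_basis[OF assms(1)] by blast
  have "I \<subseteq> B" using I(1) assms(2) by (rule subset_trans)
  from rk_ge[OF assms(1) this I(2)] show ?thesis using I(3) by simp
qed

lemma rk_le_card: assumes "is_matroid Q" "finite A" shows "rk Q A \<le> card A"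
proof -
  obtain I where I: "I \<subseteq> A" "indep Q I" "card I = rk Q A" using rk_basis[OF assms(1)] by blast
  from card_mono[OF assms(2) I(1)] show ?thesis using I(3) by simp
qed

lemma rk_indep: assumes "is_matroid Q" "indep Q I" shows "rk Q I = card I"
  using rk_ge[OF assms(1) _ assms(2), of I] rk_le_card[OF assms(1) m_fin[OF assms]] by simp

lemma rk_card_indep: assumes "is_matroid Q" "finite A" "rk Q A = card A" shows "indep Q A"
proof -
  obtain I where "I \<subseteq> A" "indep Q I" "card I = rk Q A" using rk_basis[OF assms(1)] by blast
  hence "I = A" using card_subset_eq[OF assms(2)] assms(3) by simp
  thus ?thesis using \<open>indep Q I\<close> by simp
qed

lemma aug_iter: assumes Q: "is_matroid Q"
  shows "indep Q I \<Longrightarrow> indep Q J \<Longrightarrow> card I \<le> card J \<Longrightarrow>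
     \<exists>I'. I \<subseteq> I' \<and> I' \<subseteq> I \<union> J \<and> indep Q I' \<and> card I' = card J"
proof (induction "card J - card I" arbitrary: I)
  case 0
  then show ?case by auto
next
  case (Suc n)
  then obtain x where x: "x \<in> J - I" "indep Q (insert x I)" using m_aug[OF Q] by force
  have fI: "finite I" using m_fin[OF Q Suc(3)] .
  have c: "card (insert x I) = Suc (card I)" using x fI by simp
  have "n = card J - card (insert x I)" using Suc(2) c by simp
  moreover have "card (insert x I) \<le> card J" using Suc(2) c by simp
  ultimately obtain I' where "insert x I \<subseteq> I'" "I' \<subseteq> insert x I \<union> J" "indep Q I'" "card I' = card J"
    using Suc(1) x Suc(4) by blast
  thus ?case using x by blast
qed

lemma extend_basis: assumes Q: "is_matroid Q" and "indep Q I" "I \<subseteq> A"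
  shows "\<exists>B. I \<subseteq> B \<and> B \<subseteq> A \<and> indep Q B \<and> card B = rk Q A"
proof -
  obtain J where J: "J \<subseteq> A" "indep Q J" "card J = rk Q A" using rk_basis[OF Q] by blast
  have "card I \<le> card J" using rk_ge[OF Q assms(3,2)] J by simp
  then obtain I' where I': "I \<subseteq> I'" "I' \<subseteq> I \<union> J" "indep Q I'" "card I' = card J"
    using aug_iter[OF Q assms(2) J(2)] by blast
  have "I' \<subseteq> A" using I'(2) J(1) assms(3) by auto
  thus ?thesis using I' J(3) by auto
qed

lemma span_mono: assumes Q: "is_matroid Q" and ZX: "Z \<subseteq> X" and sp: "rk Q (insert y Z) = rk Q Z"
  shows "rk Q (insert y X) = rk Q X"
proof (rule ccontr)
  assume ne: "rk Q (insert y X) \<noteq> rk Q X"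
  have "X \<subseteq> insert y X" by (rule subset_insertI)
  from rk_mono[OF Q this] ne have lt: "rk Q X < rk Q (insert y X)" by simp
  obtain I where I: "I \<subseteq> Z" "indep Q I" "card I = rk Q Z" using rk_basis[OF Q] by blast
  have IX: "I \<subseteq> X" using I(1) ZX by (rule subset_trans)
  obtain I' where I': "I \<subseteq> I'" "I' \<subseteq> X" "indep Q I'" "card I' = rk Q X"
    using extend_basis[OF Q I(2) IX] by blast
  obtain J where J: "J \<subseteq> insert y X" "indep Q J" "card J = rk Q (insert y X)" using rk_basis[OF Q] by blast
  have cl: "card I' < card J" using lt I'(4) J(3) by simp
  obtain x where x: "x \<in> J - I'" "indep Q (insert x I')" using m_aug[OF Q I'(3) J(2) cl] by blast
  have fI': "finite I'" using m_fin[OF Q I'(3)] .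
  have xI': "x \<notin> I'" using x(1) by simp
  show False
  proof (cases "x \<in> X")
    case True
    have "insert x I' \<subseteq> X" using True I'(2) by simp
    from rk_ge[OF Q this x(2)] have "card (insert x I') \<le> rk Q X" .
    thus False using xI' fI' I'(4) by simp
  next
    case False
    have xy: "x = y" using x(1) J(1) False by blast
    have sub: "insert y I \<subseteq> insert x I'" using xy I'(1) by blast
    have iy: "indep Q (insert y I)" using m_subset[OF Q x(2) sub] .
    have yI: "y \<notin> I" using xI' xy I'(1) by blast
    have "insert y I \<subseteq> insert y Z" using I(1) by (rule insert_mono)
    from rk_ge[OF Q this iy] have "card (insert y I) \<le> rk Q (insert y Z)" .
    moreover have "finite I" using finite_subset[OF I'(1) fI'] .
    ultimately show False using sp I(3) yI by simp
  qed
qed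

lemma span_union: assumes Q: "is_matroid Q"
  shows "finite Y \<Longrightarrow> (\<forall>y\<in>Y. rk Q (insert y X) = rk Q X) \<Longrightarrow> rk Q (X \<union> Y) = rk Q X"
proof (induction Y rule: finite_induct)
  case empty
  then show ?case by simp
next
  case (insert y F)
  have "rk Q (insert y (X \<union> F)) = rk Q (X \<union> F)"
    using span_mono[OF Q, of X "X \<union> F" y] insert by auto
  thus ?case using insert by simp
qed

lemma rk_subadd: assumes Q: "is_matroid Q" shows "rk Q (U \<union> V) \<le> rk Q U + rk Q V"
proof -
  obtain J where J: "J \<subseteq> U \<union> V" "indep Q J" "card J = rk Q (U \<union> V)" using rk_basis[OF Q] by blast
  have f: "finite J" using m_fin[OF Q J(2)] .
  have "card J \<le> card (J \<inter> U) + card (J - U)"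
    using card_Int_Diff[OF f, of U] by simp
  moreover have "card (J \<inter> U) \<le> rk Q U" using rk_ge[OF Q _ m_subset[OF Q J(2)]] by auto
  moreover have "card (J - U) \<le> rk Q V"
  proof -
    have "J - U \<subseteq> V" using J(1) by blast
    moreover have "indep Q (J - U)" using m_subset[OF Q J(2)] by blast
    ultimately show ?thesis by (rule rk_ge[OF Q])
  qed
  ultimately show ?thesis using J by simp
qed

lemma loop_span: assumes Q: "is_matroid Q" and "\<not> indep Q {y}" shows "rk Q (insert y X) = rk Q X"
proof -
  have "rk Q {y} = 0"
  proof -
    obtain I where "I \<subseteq> {y}" "indep Q I" "card I = rk Q {y}" using rk_basis[OF Q] by blast
    moreover have "I \<noteq> {y}" using assms \<open>indep Q I\<close> by auto
    ultimately have "I = {}" by blast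
    thus ?thesis using \<open>card I = rk Q {y}\<close> by simp
  qed
  moreover have "rk Q {} = 0" using rk_le_card[OF Q, of "{}"] by simp
  ultimately show ?thesis using span_mono[OF Q, of "{}" X y] by simp
qed

lemma rk_zero: assumes Q: "is_matroid Q" and "\<forall>w\<in>W. \<not> indep Q {w}" shows "rk Q W = 0"
proof -
  obtain I where I: "I \<subseteq> W" "indep Q I" "card I = rk Q W" using rk_basis[OF Q] by blast
  have "I = {}"
  proof (rule ccontr)
    assume "I \<noteq> {}" then obtain w where "w \<in> I" by auto
    thus False using m_subset[OF Q I(2), of "{w}"] I assms by auto
  qed
  thus ?thesis using I by simp
qed

lemma rk_zero_D: assumes Q: "is_matroid Q" and "rk Q W = 0" "w \<in> W" shows "\<not> indep Q {w}"
  using rk_ge[OF Q, of "{w}" W] assms by auto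

lemma indep_restrict: "indep (restrict Q X) I \<longleftrightarrow> indep Q I \<and> I \<subseteq> X"
  by (simp add: restrict_def indep_def)
lemma ground_restrict: "ground (restrict Q X) = ground Q \<inter> X"
  by (simp add: restrict_def ground_def)
lemma rk_restrict: "rk (restrict Q X) W = rk Q (W \<inter> X)"
  unfolding rk_def indep_restrict by (rule arg_cong[where f=Max]) auto

lemma matroid_restrict: assumes Q: "is_matroid Q" shows "is_matroid (restrict Q X)"
  unfolding is_matroid_def indep_restrict ground_restrict
proof (intro conjI allI impI)
  show "finite (ground Q \<inter> X)" using m_finite[OF Q] by simp
next
  fix I J assume "(indep Q I \<and> I \<subseteq> X) \<and> (indep Q J \<and> J \<subseteq> X) \<and> card I < card J"
  thus "\<exists>x\<in>J - I. indep Q (insert x I) \<and> insert x I \<subseteq> X" using m_aug[OF Q] by blast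
qed (use Q m_sub m_empty m_subset in blast)+

lemma ground_contract: "ground (contract Q T) = ground Q - T"
  by (simp add: contract_def ground_def)
lemma indep_contract: "indep (contract Q T) I \<longleftrightarrow> I \<subseteq> ground Q - T \<and>
   rk Q (I \<union> (T \<inter> ground Q)) = card I + rk Q (T \<inter> ground Q)"
  by (simp add: contract_def indep_def)

lemma contract_char:
  assumes Q: "is_matroid Q" and T: "T \<subseteq> ground Q" and BT: "BT \<subseteq> T" "indep Q BT" "card BT = rk Q T"
  shows "indep (contract Q T) I \<longleftrightarrow> I \<subseteq> ground Q - T \<and> indep Q (I \<union> BT)"
proof -
  have TT: "T \<inter> ground Q = T" using T by auto
  have fG: "finite (ground Q)" using m_finite[OF Q] .
  have fBT: "finite BT" using m_fin[OF Q BT(2)] .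
  show ?thesis unfolding indep_contract TT
  proof (intro iffI conjI)
    assume A: "I \<subseteq> ground Q - T \<and> rk Q (I \<union> T) = card I + rk Q T"
    then have fI: "finite I" using fG finite_subset by blast
    have dis: "I \<inter> T = {}" using A by auto
    obtain J where J: "J \<subseteq> I \<union> T" "indep Q J" "card J = rk Q (I \<union> T)" using rk_basis[OF Q] by blast
    have "card BT \<le> card J" using A J BT by simp
    then obtain B' where B': "BT \<subseteq> B'" "B' \<subseteq> BT \<union> J" "indep Q B'" "card B' = card J"
      using aug_iter[OF Q BT(2) J(2)] by blast
    have fB': "finite B'" using m_fin[OF Q B'(3)] .
    have c1: "card (B' \<inter> T) \<le> card BT" using rk_ge[OF Q _ m_subset[OF Q B'(3)], of "B' \<inter> T" T] BT by auto
    have c2: "card (B' - T) \<le> card I" using B' J BT fI by (intro card_mono) auto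
    have "card B' = card (B' \<inter> T) + card (B' - T)"
      using card_Int_Diff[OF fB', of T] .
    then have e1: "card (B' \<inter> T) = card BT" and e2: "card (B' - T) = card I"
      using c1 c2 B' J A BT by linarith+
    have s1: "BT \<subseteq> B' \<inter> T" using B'(1) BT(1) by blast
    have "BT = B' \<inter> T" using card_subset_eq[OF _ s1] fB' e1 by simp
    moreover have s2: "B' - T \<subseteq> I" using B'(2) J(1) BT(1) by blast
    have "B' - T = I" using card_subset_eq[OF fI s2] e2 by simp
    ultimately have "B' = I \<union> BT" by blast
    thus "indep Q (I \<union> BT)" using B' by simp
  next
    assume A: "I \<subseteq> ground Q - T \<and> indep Q (I \<union> BT)"
    then have fI: "finite I" using fG finite_subset by blast
    have dis: "I \<inter> BT = {}" using A BT by auto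
    have "card I + rk Q T \<le> rk Q (I \<union> T)"
      using rk_ge[OF Q _ conjunct2[OF A], of "I \<union> T"] BT card_Un_disjoint[OF fI fBT dis] by auto
    moreover have "rk Q (I \<union> T) \<le> card I + rk Q T"
      using rk_subadd[OF Q, of I T] rk_le_card[OF Q fI] by simp
    ultimately show "rk Q (I \<union> T) = card I + rk Q T" by simp
  qed auto
qed

lemma matroid_contract: assumes Q: "is_matroid Q" and T: "T \<subseteq> ground Q"
  shows "is_matroid (contract Q T)"
proof -
  obtain BT where BT: "BT \<subseteq> T" "indep Q BT" "card BT = rk Q T" using rk_basis[OF Q] by blast
  note ch = contract_char[OF Q T BT]
  have g1: "finite (ground (contract Q T))" using m_finite[OF Q] by (simp add: ground_contract)
  have g2: "\<forall>I. indep (contract Q T) I \<longrightarrow> I \<subseteq> ground (contract Q T)"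
    by (simp add: ch ground_contract)
  have g3: "indep (contract Q T) {}" using BT by (simp add: ch)
  have g4: "\<forall>I J. indep (contract Q T) J \<and> I \<subseteq> J \<longrightarrow> indep (contract Q T) I"
  proof (intro allI impI)
    fix I J assume a: "indep (contract Q T) J \<and> I \<subseteq> J"
    hence "J \<subseteq> ground Q - T" "indep Q (J \<union> BT)" "I \<subseteq> J" using ch by auto
    moreover have "I \<union> BT \<subseteq> J \<union> BT" using \<open>I \<subseteq> J\<close> by blast
    ultimately show "indep (contract Q T) I" using ch m_subset[OF Q] by blast
  qed
  have g5: "\<forall>I J. indep (contract Q T) I \<and> indep (contract Q T) J \<and> card I < card J \<longrightarrow>
        (\<exists>x \<in> J - I. indep (contract Q T) (insert x I))"
  proof (intro allI impI)
    fix I J assume "indep (contract Q T) I \<and> indep (contract Q T) J \<and> card I < card J"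
    then have A: "I \<subseteq> ground Q - T" "indep Q (I \<union> BT)" "J \<subseteq> ground Q - T" "indep Q (J \<union> BT)" "card I < card J"
      using ch by auto
    have fG: "finite (ground Q - T)" using m_finite[OF Q] by simp
    have fI: "finite I" "finite J" "finite BT"
      using finite_subset[OF A(1) fG] finite_subset[OF A(3) fG] m_fin[OF Q BT(2)]
      by auto
    have d1: "I \<inter> BT = {}" using A(1) BT(1) by blast
    have d2: "J \<inter> BT = {}" using A(3) BT(1) by blast
    have "card (I \<union> BT) < card (J \<union> BT)"
      using card_Un_disjoint[OF fI(1,3) d1] card_Un_disjoint[OF fI(2,3) d2] A(5) by simp
    then obtain x where x: "x \<in> (J \<union> BT) - (I \<union> BT)" "indep Q (insert x (I \<union> BT))"
      using m_aug[OF Q A(2) A(4)] by blast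
    have "x \<in> J - I" using x(1) by blast
    moreover have "insert x I \<subseteq> ground Q - T" using x(1) A(1,3) by blast
    moreover have "insert x I \<union> BT = insert x (I \<union> BT)" by simp
    ultimately show "\<exists>x \<in> J - I. indep (contract Q T) (insert x I)" using ch x(2) by auto
  qed
  show ?thesis unfolding is_matroid_def by (intro conjI g1 g2 g3 g4 g5)
qed

lemma rk_contract: assumes Q: "is_matroid Q" and T: "T \<subseteq> ground Q" and W: "W \<subseteq> ground Q - T"
  shows "rk (contract Q T) W = rk Q (W \<union> T) - rk Q T"
proof -
  obtain BT where BT: "BT \<subseteq> T" "indep Q BT" "card BT = rk Q T" using rk_basis[OF Q] by blast
  note ch = contract_char[OF Q T BT]
  have C: "is_matroid (contract Q T)" using matroid_contract[OF Q T] .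
  have fBT: "finite BT" using m_fin[OF Q BT(2)] .
  have fW: "finite W" using W m_finite[OF Q] finite_subset by blast
  obtain I where I: "I \<subseteq> W" "indep (contract Q T) I" "card I = rk (contract Q T) W" using rk_basis[OF C] by blast
  have dI: "I \<inter> BT = {}" using I W BT by auto
  have "card (I \<union> BT) \<le> rk Q (W \<union> T)"
  proof (rule rk_ge[OF Q])
    show "I \<union> BT \<subseteq> W \<union> T" using I(1) BT(1) by blast
    show "indep Q (I \<union> BT)" using ch I(2) by simp
  qed
  hence le1: "rk (contract Q T) W + rk Q T \<le> rk Q (W \<union> T)"
    using card_Un_disjoint[OF finite_subset[OF I(1) fW] fBT dI] I BT by simp
  obtain B' where B': "BT \<subseteq> B'" "B' \<subseteq> W \<union> T" "indep Q B'" "card B' = rk Q (W \<union> T)"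
    using extend_basis[OF Q BT(2), of "W \<union> T"] BT by blast
  have fB': "finite B'" using m_fin[OF Q B'(3)] .
  have c1: "card (B' \<inter> T) \<le> card BT" using rk_ge[OF Q _ m_subset[OF Q B'(3)], of "B' \<inter> T" T] BT by auto
  have s1: "BT \<subseteq> B' \<inter> T" using B'(1) BT(1) by blast
  have "BT = B' \<inter> T" using card_seteq[OF _ s1] fB' c1 by simp
  hence "B' \<inter> T = BT" by simp
  hence eqB: "B' = (B' - T) \<union> BT" by blast
  have "B' - T \<subseteq> ground Q - T" using B'(2) W by blast
  hence "indep (contract Q T) (B' - T)" using ch B'(3) eqB by simp
  moreover have "B' - T \<subseteq> W" using B'(2) by blast
  ultimately have "card (B' - T) \<le> rk (contract Q T) W" using rk_ge[OF C] by blast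
  moreover have "card B' = card (B' - T) + card BT"
    using card_Int_Diff[OF fB', of T] \<open>B' \<inter> T = BT\<close> by simp
  ultimately show ?thesis using le1 B' BT by linarith
qed

lemma rk_transfer: assumes "inj g" and "\<forall>X \<subseteq> W. indep Q (g ` X) \<longleftrightarrow> indep R X"
  shows "rk Q (g ` W) = rk R W"
proof -
  have "{card I | I. I \<subseteq> g ` W \<and> indep Q I} = {card X | X. X \<subseteq> W \<and> indep R X}"
  proof (intro equalityI subsetI)
    fix c assume "c \<in> {card I | I. I \<subseteq> g ` W \<and> indep Q I}"
    then obtain I where I: "c = card I" "I \<subseteq> g ` W" "indep Q I" by auto
    define X where "X = g -` I \<inter> W"
    have "g ` X = I" using I(2) unfolding X_def by auto
    moreover have "card (g ` X) = card X" using assms(1) by (simp add: card_image inj_on_subset)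
    ultimately show "c \<in> {card X | X. X \<subseteq> W \<and> indep R X}" using I assms(2) X_def by auto
  next
    fix c assume "c \<in> {card X | X. X \<subseteq> W \<and> indep R X}"
    then obtain X where X: "c = card X" "X \<subseteq> W" "indep R X" by auto
    have "card (g ` X) = card X" using assms(1) by (simp add: card_image inj_on_subset)
    moreover have "g ` X \<subseteq> g ` W" using X(2) by (rule image_mono)
    moreover have "indep Q (g ` X)" using X(2,3) assms(2) by blast
    ultimately show "c \<in> {card I | I. I \<subseteq> g ` W \<and> indep Q I}" unfolding X(1)
      by (intro CollectI exI[of _ "g ` X"]) simp
  qed
  thus ?thesis unfolding rk_def by simp
qed

lemma times_single: "X \<times> {f} = (\<lambda>x. (x, f)) ` X" by auto
lemma single_times: "{e} \<times> X = (\<lambda>x. (e, x)) ` X" by auto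

locale tp =
  fixes M :: "'a matroid" and N :: "'b matroid" and P :: "('a \<times> 'b) matroid"
  assumes M: "is_matroid M" and N: "is_matroid N" and tens: "tensor_product M N P"
begin

abbreviation "EM \<equiv> ground M"
abbreviation "EN \<equiv> ground N"

lemma qp: "quasi_product M N P" using tens by (simp add: tensor_product_def)
lemma P: "is_matroid P" using qp by (simp add: quasi_product_def)
lemma gP: "ground P = EM \<times> EN" using qp by (simp add: quasi_product_def)
lemma rkP: "rk P (EM \<times> EN) = rk M EM * rk N EN" using tens gP by (simp add: tensor_product_def)

lemma isoM: assumes "f \<in> EN" "\<not> is_loop N f" "X \<subseteq> EM"
  shows "indep P (X \<times> {f}) \<longleftrightarrow> indep M X"
proof -
  have "matroid_iso (\<lambda>x. (x, f)) M (restrict P (EM \<times> {f}))" using qp assms by (simp add: quasi_product_def)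
  then have "indep M X \<longleftrightarrow> indep (restrict P (EM \<times> {f})) ((\<lambda>x. (x, f)) ` X)"
    using assms(3) unfolding matroid_iso_def by blast
  thus ?thesis using assms(3) by (auto simp: indep_restrict times_single[symmetric])
qed

lemma isoN: assumes "e \<in> EM" "\<not> is_loop M e" "X \<subseteq> EN"
  shows "indep P ({e} \<times> X) \<longleftrightarrow> indep N X"
proof -
  have "matroid_iso (\<lambda>x. (e, x)) N (restrict P ({e} \<times> EN))" using qp assms by (simp add: quasi_product_def)
  then have "indep N X \<longleftrightarrow> indep (restrict P ({e} \<times> EN)) ((\<lambda>x. (e, x)) ` X)"
    using assms(3) unfolding matroid_iso_def by blast
  thus ?thesis using assms(3) by (auto simp: indep_restrict single_times[symmetric])
qed

lemma rkM: assumes "f \<in> EN" "\<not> is_loop N f" "X \<subseteq> EM"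
  shows "rk P (X \<times> {f}) = rk M X"
  unfolding times_single
proof (rule rk_transfer)
  show "inj (\<lambda>x. (x, f))" by (auto simp: inj_def)
  show "\<forall>Y \<subseteq> X. indep P ((\<lambda>x. (x, f)) ` Y) \<longleftrightarrow> indep M Y"
  proof (intro allI impI)
    fix Y assume "Y \<subseteq> X"
    then have YE: "Y \<subseteq> EM" using assms(3) by blast
    show "indep P ((\<lambda>x. (x, f)) ` Y) \<longleftrightarrow> indep M Y" using isoM[OF assms(1,2) YE] by (simp add: times_single)
  qed
qed

lemma rkN: assumes "e \<in> EM" "\<not> is_loop M e" "X \<subseteq> EN"
  shows "rk P ({e} \<times> X) = rk N X"
  unfolding single_times
proof (rule rk_transfer)
  show "inj (\<lambda>x. (e, x))" by (auto simp: inj_def)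
  show "\<forall>Y \<subseteq> X. indep P ((\<lambda>x. (e, x)) ` Y) \<longleftrightarrow> indep N Y"
  proof (intro allI impI)
    fix Y assume "Y \<subseteq> X"
    then have YE: "Y \<subseteq> EN" using assms(3) by blast
    show "indep P ((\<lambda>x. (e, x)) ` Y) \<longleftrightarrow> indep N Y" using isoN[OF assms(1,2) YE] by (simp add: single_times)
  qed
qed

lemma loopM: assumes "is_loop M e" "y \<in> EN" shows "\<not> indep P {(e, y)}"
proof -
  have "e \<in> EM" using assms by (simp add: is_loop_def)
  hence "rk P ({e} \<times> EN) = 0" using qp assms by (simp add: quasi_product_def)
  thus ?thesis using rk_zero_D[OF P] assms by auto
qed

lemma loopN: assumes "is_loop N y" "e \<in> EM" shows "\<not> indep P {(e, y)}"
proof -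
  have "y \<in> EN" using assms by (simp add: is_loop_def)
  hence "rk P (EM \<times> {y}) = 0" using qp assms by (simp add: quasi_product_def)
  thus ?thesis using rk_zero_D[OF P] assms by auto
qed

lemma UB: assumes A: "A \<subseteq> EM" and BA: "BA \<subseteq> A" "indep M BA" "card BA = rk M A"
  and BN: "BN \<subseteq> EN" "indep N BN" "card BN = rk N EN"
  shows "rk P (A \<times> EN) \<le> rk P (BA \<times> BN)"
proof -
  let ?X = "BA \<times> BN"
  have fEM: "finite EM" using m_finite[OF M] .
  have fEN: "finite EN" using m_finite[OF N] .
  have s1: "\<forall>z\<in>BA \<times> EN. rk P (insert z ?X) = rk P ?X"
  proof
    fix z assume z: "z \<in> BA \<times> EN"
    then obtain b y where zb: "z = (b, y)" "b \<in> BA" "y \<in> EN" by auto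
    have bE: "b \<in> EM" using zb BA A by auto
    have bnl: "\<not> is_loop M b" using m_subset[OF M BA(2), of "{b}"] zb by (auto simp: is_loop_def)
    show "rk P (insert z ?X) = rk P ?X"
    proof (cases "is_loop N y")
      case True
      then show ?thesis using loop_span[OF P loopN[OF True bE]] zb by simp
    next
      case False
      have "rk N (insert y BN) \<le> rk N BN"
        using rk_mono[OF N, of "insert y BN" EN] zb BN rk_indep[OF N BN(2)] by simp
      moreover have "rk N BN \<le> rk N (insert y BN)" by (rule rk_mono[OF N]) auto
      moreover have r1: "rk P ({b} \<times> insert y BN) = rk N (insert y BN)"
        by (rule rkN[OF bE bnl]) (use zb BN in auto)
      moreover have r2: "rk P ({b} \<times> BN) = rk N BN" by (rule rkN[OF bE bnl BN(1)])
      moreover have eq: "insert z ({b} \<times> BN) = {b} \<times> insert y BN" using zb by auto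
      ultimately have "rk P (insert z ({b} \<times> BN)) = rk P ({b} \<times> BN)"
        unfolding eq r1 r2 by linarith
      thus ?thesis by (rule span_mono[OF P, rotated]) (use zb in auto)
    qed
  qed
  have e1: "rk P (?X \<union> BA \<times> EN) = rk P ?X"
    by (rule span_union[OF P _ s1]) (use fEN finite_subset[OF _ fEM] BA A in auto)
  let ?X2 = "?X \<union> BA \<times> EN"
  have s2: "\<forall>z\<in>A \<times> EN. rk P (insert z ?X2) = rk P ?X2"
  proof
    fix z assume z: "z \<in> A \<times> EN"
    then obtain a y where zb: "z = (a, y)" "a \<in> A" "y \<in> EN" by auto
    have aE: "a \<in> EM" using zb A by auto
    show "rk P (insert z ?X2) = rk P ?X2"
    proof (cases "is_loop M a \<or> is_loop N y")
      case True
      then have "\<not> indep P {(a, y)}" using loopN[OF _ aE] loopM[OF _ zb(3)] by blast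
      then show ?thesis using loop_span[OF P] zb(1) by simp
    next
      case False
      have "rk M (insert a BA) \<le> rk M BA"
        using rk_mono[OF M, of "insert a BA" A] zb BA rk_indep[OF M BA(2)] by simp
      moreover have "rk M BA \<le> rk M (insert a BA)" by (rule rk_mono[OF M]) auto
      moreover have r1: "rk P (insert a BA \<times> {y}) = rk M (insert a BA)"
        by (rule rkM[OF zb(3)]) (use False BA(1) A aE in auto)
      moreover have r2: "rk P (BA \<times> {y}) = rk M BA"
        by (rule rkM[OF zb(3)]) (use False BA(1) A in auto)
      moreover have eq: "insert z (BA \<times> {y}) = insert a BA \<times> {y}" using zb by auto
      ultimately have "rk P (insert z (BA \<times> {y})) = rk P (BA \<times> {y})"
        unfolding eq r1 r2 by linarith
      thus ?thesis by (rule span_mono[OF P, rotated]) (use zb in auto)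
    qed
  qed
  have "rk P (?X2 \<union> A \<times> EN) = rk P ?X2"
    by (rule span_union[OF P _ s2]) (use fEN finite_subset[OF A fEM] in auto)
  moreover have "rk P (A \<times> EN) \<le> rk P (?X2 \<union> A \<times> EN)" by (rule rk_mono[OF P]) auto
  ultimately show ?thesis using e1 by simp
qed


lemma MULT: assumes X: "X \<subseteq> EM" shows "rk P (X \<times> EN) = rk M X * rk N EN"
proof -
  obtain BX where BX: "BX \<subseteq> X" "indep M BX" "card BX = rk M X" using rk_basis[OF M] by blast
  have BXE: "BX \<subseteq> EM" using BX(1) X by (rule subset_trans)
  obtain B where B: "BX \<subseteq> B" "B \<subseteq> EM" "indep M B" "card B = rk M EM"
    using extend_basis[OF M BX(2) BXE] by blast
  obtain BN where BN: "BN \<subseteq> EN" "indep N BN" "card BN = rk N EN" using rk_basis[OF N] by blast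
  have fB: "finite B" using m_fin[OF M B(3)] .
  have fBX: "finite BX" using m_fin[OF M BX(2)] .
  have fBN: "finite BN" using m_fin[OF N BN(2)] .
  have cBXBN: "card (BX \<times> BN) = rk M X * rk N EN" using BX(3) BN(3) by (simp add: card_cartesian_product)
  have u1: "rk P (X \<times> EN) \<le> rk P (BX \<times> BN)" by (rule UB[OF X BX BN])
  have u2: "rk P (BX \<times> BN) \<le> card (BX \<times> BN)" by (rule rk_le_card[OF P]) (use fBX fBN in simp)
  have up: "rk P (X \<times> EN) \<le> rk M X * rk N EN" using u1 u2 cBXBN by linarith
  have l1: "rk M EM * rk N EN \<le> rk P (B \<times> BN)"
    using UB[OF order_refl B(2,3,4) BN] rkP by simp
  have eqB: "B \<times> BN = BX \<times> BN \<union> (B - BX) \<times> BN" using B(1) by auto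
  have l2: "rk P (BX \<times> BN \<union> (B - BX) \<times> BN) \<le> rk P (BX \<times> BN) + rk P ((B - BX) \<times> BN)"
    by (rule rk_subadd[OF P])
  have l3: "rk P (BX \<times> BN) \<le> rk P (X \<times> EN)"
    by (rule rk_mono[OF P]) (use BX(1) BN(1) in auto)
  have l4: "rk P ((B - BX) \<times> BN) \<le> card ((B - BX) \<times> BN)" by (rule rk_le_card[OF P]) (use fB fBN in simp)
  have l5: "card ((B - BX) \<times> BN) = (rk M EM - rk M X) * rk N EN"
    using B(1,4) BX(3) BN(3) fB by (simp add: card_cartesian_product card_Diff_subset finite_subset)
  have fin: "rk M EM * rk N EN \<le> rk P (X \<times> EN) + (rk M EM - rk M X) * rk N EN"
    using l1 l2 l3 l4 l5 eqB by simp
  have le: "rk M X \<le> rk M EM" by (rule rk_mono[OF M X])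
  have d: "(rk M EM - rk M X) * rk N EN = rk M EM * rk N EN - rk M X * rk N EN" by (simp add: diff_mult_distrib)
  have m: "rk M X * rk N EN \<le> rk M EM * rk N EN" using le by (rule mult_le_mono1)
  have "rk M X * rk N EN \<le> rk P (X \<times> EN)" using fin d m by linarith
  thus ?thesis using up by simp
qed

lemma INDEP_PROD: assumes I: "indep M I" and BN: "BN \<subseteq> EN" "indep N BN" "card BN = rk N EN"
  shows "indep P (I \<times> BN)"
proof -
  have IE: "I \<subseteq> EM" using m_sub[OF M I] .
  have fI: "finite I" using m_fin[OF M I] .
  have fBN: "finite BN" using m_fin[OF N BN(2)] .
  have a1: "card I * rk N EN = rk P (I \<times> EN)" using MULT[OF IE] rk_indep[OF M I] by simp
  have a2: "rk P (I \<times> EN) \<le> rk P (I \<times> BN)" using UB[OF IE order_refl I rk_indep[OF M I, symmetric] BN] .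
  have a3: "rk P (I \<times> BN) \<le> card (I \<times> BN)" by (rule rk_le_card[OF P]) (use fI fBN in auto)
  have a4: "card (I \<times> BN) = card I * rk N EN" using BN(3) by (simp add: card_cartesian_product)
  have "rk P (I \<times> BN) = card (I \<times> BN)" using a1 a2 a3 a4 by linarith
  thus ?thesis by (rule rk_card_indep[OF P, rotated]) (use fI fBN in auto)
qed



lemma main: assumes S: "S \<subseteq> EM" and T: "T \<subseteq> EM" and ST: "S \<inter> T = {}"
  shows "tensor_product (contract (delete M S) T) N (contract (delete P (S \<times> EN)) (T \<times> EN))"
proof -
  define M1 where "M1 = delete M S"
  define P1 where "P1 = delete P (S \<times> EN)"
  define M' where "M' = contract M1 T"
  define P' where "P' = contract P1 (T \<times> EN)"
  define E' where "E' = EM - S - T"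
  have M1: "is_matroid M1" unfolding M1_def delete_def by (rule matroid_restrict[OF M])
  have P1: "is_matroid P1" unfolding P1_def delete_def by (rule matroid_restrict[OF P])
  have gM1: "ground M1 = EM - S" unfolding M1_def delete_def ground_restrict by auto
  have gP1: "ground P1 = (EM - S) \<times> EN" unfolding P1_def delete_def ground_restrict gP by auto
  have iM1: "\<And>I. indep M1 I \<longleftrightarrow> indep M I \<and> I \<subseteq> EM - S" unfolding M1_def delete_def indep_restrict by simp
  have iP1: "\<And>I. indep P1 I \<longleftrightarrow> indep P I \<and> I \<subseteq> (EM - S) \<times> EN"
    unfolding P1_def delete_def indep_restrict gP by (simp add: Times_Diff_distrib1)
  have rM1: "\<And>W. rk M1 W = rk M (W \<inter> (EM - S))" unfolding M1_def delete_def rk_restrict by simp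
  have rP1: "\<And>W. rk P1 W = rk P (W \<inter> ((EM - S) \<times> EN))"
    unfolding P1_def delete_def rk_restrict gP by (simp add: Times_Diff_distrib1)
  have TM1: "T \<subseteq> ground M1" using T ST gM1 by auto
  have TP1: "T \<times> EN \<subseteq> ground P1" using T ST gP1 by auto
  have gM': "ground M' = E'" unfolding M'_def ground_contract gM1 E'_def by auto
  have gP': "ground P' = E' \<times> EN" unfolding P'_def ground_contract gP1 E'_def by auto
  have P': "is_matroid P'" unfolding P'_def by (rule matroid_contract[OF P1 TP1])
  obtain BT where BT: "BT \<subseteq> T" "indep M BT" "card BT = rk M T" using rk_basis[OF M] by blast
  have TS: "T \<inter> (EM - S) = T" using T ST by auto
  have BT1: "indep M1 BT" "card BT = rk M1 T" using BT iM1 rM1 TS T ST by auto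
  have CM: "\<And>I. indep M' I \<longleftrightarrow> I \<subseteq> E' \<and> indep M (I \<union> BT)"
  proof -
    fix I
    have "indep M' I \<longleftrightarrow> I \<subseteq> ground M1 - T \<and> indep M1 (I \<union> BT)"
      unfolding M'_def by (rule contract_char[OF M1 TM1 BT(1) BT1])
    thus "indep M' I \<longleftrightarrow> I \<subseteq> E' \<and> indep M (I \<union> BT)"
      using iM1 gM1 BT T ST unfolding E'_def by auto
  qed
  have CP: "\<And>W BN. BN \<subseteq> EN \<Longrightarrow> indep N BN \<Longrightarrow> card BN = rk N EN \<Longrightarrow>
     indep P' W \<longleftrightarrow> W \<subseteq> E' \<times> EN \<and> indep P (W \<union> BT \<times> BN)"
  proof -
    fix W BN assume BN: "BN \<subseteq> EN" "indep N BN" "card BN = rk N EN"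
    have TEP: "T \<times> EN \<inter> ((EM - S) \<times> EN) = T \<times> EN" using TS by auto
    have i1: "indep P1 (BT \<times> BN)" using iP1 INDEP_PROD[OF BT(2) BN] BT BN T ST by auto
    have c1: "card (BT \<times> BN) = rk P1 (T \<times> EN)"
      unfolding rP1 TEP MULT[OF T] using BT BN by (simp add: card_cartesian_product)
    have "indep P' W \<longleftrightarrow> W \<subseteq> ground P1 - T \<times> EN \<and> indep P1 (W \<union> BT \<times> BN)"
      unfolding P'_def by (rule contract_char[OF P1 TP1 _ i1 c1]) (use BT BN in auto)
    moreover have "ground P1 - T \<times> EN = E' \<times> EN" unfolding gP1 E'_def by auto
    ultimately show "indep P' W \<longleftrightarrow> W \<subseteq> E' \<times> EN \<and> indep P (W \<union> BT \<times> BN)"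
      using iP1 BT BN T ST unfolding E'_def by auto
  qed
  obtain BN0 where BN0: "BN0 \<subseteq> EN" "indep N BN0" "card BN0 = rk N EN" using rk_basis[OF N] by blast
  have E'sub: "E' \<subseteq> EM" unfolding E'_def by auto
  have BTE: "BT \<subseteq> EM" using BT T by auto
  have c: "matroid_iso (\<lambda>x. (e, x)) N (restrict P' ({e} \<times> EN))"
    if e: "e \<in> ground M'" "\<not> is_loop M' e" for e
  proof -
    have eE: "e \<in> E'" using e gM' by simp
    have ieBT: "indep M (insert e BT)" using e CM[of "{e}"] gM' by (simp add: is_loop_def)
    have enl: "\<not> is_loop M e" using m_subset[OF M ieBT, of "{e}"] by (auto simp: is_loop_def)
    have eEM: "e \<in> EM" using eE E'sub by auto
    have "bij_betw (\<lambda>x. (e, x)) EN (ground (restrict P' ({e} \<times> EN)))"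
      unfolding ground_restrict gP' using eE by (auto simp: bij_betw_def inj_on_def)
    moreover have "indep N J \<longleftrightarrow> indep (restrict P' ({e} \<times> EN)) ((\<lambda>x. (e, x)) ` J)" if J: "J \<subseteq> EN" for J
    proof
      assume iJ: "indep N J"
      obtain BN where BN: "J \<subseteq> BN" "BN \<subseteq> EN" "indep N BN" "card BN = rk N EN"
        using extend_basis[OF N iJ J] by blast
      have "indep P (insert e BT \<times> BN)" by (rule INDEP_PROD[OF ieBT BN(2-4)])
      hence "indep P ({e} \<times> J \<union> BT \<times> BN)" by (rule m_subset[OF P]) (use BN in auto)
      hence "indep P' ({e} \<times> J)" using CP[OF BN(2-4)] eE J by auto
      thus "indep (restrict P' ({e} \<times> EN)) ((\<lambda>x. (e, x)) ` J)"
        unfolding indep_restrict single_times[symmetric] using J by auto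
    next
      assume "indep (restrict P' ({e} \<times> EN)) ((\<lambda>x. (e, x)) ` J)"
      hence "indep P' ({e} \<times> J)" unfolding indep_restrict single_times[symmetric] by simp
      hence "indep P ({e} \<times> J \<union> BT \<times> BN0)" using CP[OF BN0] by simp
      hence "indep P ({e} \<times> J)" by (rule m_subset[OF P]) auto
      thus "indep N J" using isoN[OF eEM enl J] by simp
    qed
    ultimately show ?thesis unfolding matroid_iso_def by blast
  qed
  have d: "matroid_iso (\<lambda>x. (x, f)) M' (restrict P' (ground M' \<times> {f}))"
    if f: "f \<in> EN" "\<not> is_loop N f" for f
  proof -
    have if1: "indep N {f}" using f by (simp add: is_loop_def)
    have fE: "{f} \<subseteq> EN" using f(1) by simp
    obtain BN where BN: "{f} \<subseteq> BN" "BN \<subseteq> EN" "indep N BN" "card BN = rk N EN"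
      using extend_basis[OF N if1 fE] by blast
    have "bij_betw (\<lambda>x. (x, f)) (ground M') (ground (restrict P' (ground M' \<times> {f})))"
      unfolding ground_restrict gP' gM' using f by (auto simp: bij_betw_def inj_on_def)
    moreover have "indep M' I \<longleftrightarrow> indep (restrict P' (ground M' \<times> {f})) ((\<lambda>x. (x, f)) ` I)"
      if I: "I \<subseteq> ground M'" for I
    proof -
      have IE: "I \<subseteq> E'" using I gM' by simp
      have "indep (restrict P' (ground M' \<times> {f})) ((\<lambda>x. (x, f)) ` I) \<longleftrightarrow> indep P' (I \<times> {f})"
        unfolding indep_restrict times_single[symmetric] using I by auto
      also have "\<dots> \<longleftrightarrow> indep P (I \<times> {f} \<union> BT \<times> BN)" using CP[OF BN(2-4)] IE f by auto
      also have "\<dots> \<longleftrightarrow> indep M (I \<union> BT)"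
      proof
        assume "indep P (I \<times> {f} \<union> BT \<times> BN)"
        hence "indep P ((I \<union> BT) \<times> {f})" by (rule m_subset[OF P]) (use BN in auto)
        moreover have ieE: "I \<union> BT \<subseteq> EM" using IE E'sub BTE by blast
        ultimately show "indep M (I \<union> BT)" using isoM[OF f ieE] by blast
      next
        assume "indep M (I \<union> BT)"
        hence "indep P ((I \<union> BT) \<times> BN)" by (rule INDEP_PROD[OF _ BN(2-4)])
        thus "indep P (I \<times> {f} \<union> BT \<times> BN)" by (rule m_subset[OF P]) (use BN in auto)
      qed
      also have "\<dots> \<longleftrightarrow> indep M' I" using CM IE by simp
      finally show ?thesis by simp
    qed
    ultimately show ?thesis unfolding matroid_iso_def by blast
  qed
  have e: "rk P' ({e} \<times> EN) = 0" if e: "e \<in> ground M'" "is_loop M' e" for e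
  proof (rule rk_zero[OF P'], intro ballI)
    fix z assume z: "z \<in> {e} \<times> EN"
    then obtain x where zx: "z = (e, x)" "x \<in> EN" by auto
    have eE: "e \<in> E'" using e gM' by simp
    have nI: "\<not> indep M (insert e BT)" using e CM[of "{e}"] gM' by (simp add: is_loop_def)
    show "\<not> indep P' {z}"
    proof
      assume iz: "indep P' {z}"
      show False
      proof (cases "is_loop N x")
        case True
        have "indep P ({z} \<union> BT \<times> BN0)" using iz CP[OF BN0] by simp
        hence "indep P {(e, x)}" using zx m_subset[OF P] by blast
        thus False using loopN[OF True] eE E'sub by auto
      next
        case False
        have if1: "indep N {x}" using False zx by (simp add: is_loop_def)
        have xE: "{x} \<subseteq> EN" using zx(2) by simp
        obtain BN where BN: "{x} \<subseteq> BN" "BN \<subseteq> EN" "indep N BN" "card BN = rk N EN"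
          using extend_basis[OF N if1 xE] by blast
        have "indep P ({z} \<union> BT \<times> BN)" using iz CP[OF BN(2-4)] by simp
        hence "indep P (insert e BT \<times> {x})" by (rule m_subset[OF P]) (use zx BN in auto)
        moreover have ieE: "insert e BT \<subseteq> EM" using eE E'sub BTE by blast
        ultimately have "indep M (insert e BT)" using isoM[OF zx(2) False ieE] by blast
        thus False using nI by simp
      qed
    qed
  qed
  have f: "rk P' (ground M' \<times> {f}) = 0" if f: "f \<in> EN" "is_loop N f" for f
  proof (rule rk_zero[OF P'], intro ballI notI)
    fix z assume z: "z \<in> ground M' \<times> {f}" and iz: "indep P' {z}"
    then obtain a where za: "z = (a, f)" "a \<in> E'" using gM' by auto
    have "indep P ({z} \<union> BT \<times> BN0)" using iz CP[OF BN0] by simp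
    hence "indep P {(a, f)}" using za m_subset[OF P] by blast
    thus False using loopN[OF f(2)] za E'sub by auto
  qed
  have g: "rk P' (ground P') = rk M' (ground M') * rk N EN"
  proof -
    have E'M1: "E' \<subseteq> ground M1 - T" unfolding gM1 E'_def by blast
    have a1: "rk M' E' = rk M1 (E' \<union> T) - rk M1 T"
      unfolding M'_def by (rule rk_contract[OF M1 TM1 E'M1])
    have a2: "E' \<union> T = EM - S" unfolding E'_def using T ST by auto
    have a3: "rk M1 (EM - S) = rk M (EM - S)" using rM1 by simp
    have a4: "rk M1 T = rk M T" using rM1 TS by simp
    have r1: "rk M' (ground M') = rk M (EM - S) - rk M T" unfolding gM' a1 a2 a3 a4 ..
    have E'P1: "E' \<times> EN \<subseteq> ground P1 - T \<times> EN" unfolding gP1 E'_def by blast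
    have b1: "rk P' (E' \<times> EN) = rk P1 (E' \<times> EN \<union> T \<times> EN) - rk P1 (T \<times> EN)"
      unfolding P'_def by (rule rk_contract[OF P1 TP1 E'P1])
    have b2: "E' \<times> EN \<union> T \<times> EN = (EM - S) \<times> EN" unfolding E'_def using T ST by auto
    have b3: "rk P1 ((EM - S) \<times> EN) = rk P ((EM - S) \<times> EN)" using rP1 by simp
    have b4: "rk P1 (T \<times> EN) = rk P (T \<times> EN)"
    proof -
      have "T \<times> EN \<inter> ((EM - S) \<times> EN) = T \<times> EN" using TS by auto
      thus ?thesis using rP1 by simp
    qed
    have b5: "rk P ((EM - S) \<times> EN) = rk M (EM - S) * rk N EN" by (rule MULT) blast
    have b6: "rk P (T \<times> EN) = rk M T * rk N EN" by (rule MULT[OF T])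
    have "rk P' (ground P') = rk M (EM - S) * rk N EN - rk M T * rk N EN"
      unfolding gP' b1 b2 b3 b4 b5 b6 ..
    thus ?thesis unfolding r1 by (simp add: diff_mult_distrib)
  qed
  have "quasi_product M' N P'"
    unfolding quasi_product_def using P' gP' gM' c d e f by auto
  thus ?thesis using g unfolding tensor_product_def M'_def P'_def M1_def P1_def by simp
qed

end


theorem proposition2p6:
  fixes M :: "'a matroid" and N :: "'b matroid" and P :: "('a \<times> 'b) matroid"
    and S T :: "'a set"
  assumes "is_matroid M" and "is_matroid N"
    and "tensor_product M N P"
    and "S \<subseteq> ground M" and "T \<subseteq> ground M" and "S \<inter> T = {}"
  shows "tensor_product (contract (delete M S) T) N
           (contract (delete P (S \<times> ground N)) (T \<times> ground N))"
proof -
  interpret tp M N P using assms(1-3) by unfold_locales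
  show ?thesis by (rule main[OF assms(4-6)])
qed

end
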